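(* Let $G$ be a prime graph and $v\in V(G)$. (1) $v$ is simplicial if and only if, in every induced subgraph of $G$ isomorphic to $P_4$ that contains $v$, the vertex $v$ has degree one (in that $P_4$). (2) $v$ is antisimplicial if and only if, in every induced subgraph of $G$ isomorphic to $P_4$ that contains $v$, the vertex $v$ has degree two (in that $P_4$).
   Context: All graphs are finite and simple. $P_4$ is the path on four vertices. A vertex $b\notin X$ is mixed on $X$ if it has both a neighbor and a non-neighbor in $X$. A homogeneous set is a set $X\subseteq V(G)$ with $1<|X|<|V(G)|$ such that no vertex outside $X$ is mixed on $X$. $G$ is prime if $|V(G)|\ge4$ and has no homogeneous set. A vertex $v$ is simplicial if $N(v)$ is a clique, antisimplicial if $V(G)\setminus N(v)$ is a stable set. *)

theory Defs
  imports Main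
begin

definition graph :: "'a set \<Rightarrow> ('a \<Rightarrow> 'a \<Rightarrow> bool) \<Rightarrow> bool" where
  "graph V E \<longleftrightarrow> finite V \<and> (\<forall>x y. E x y \<longrightarrow> x \<in> V \<and> y \<in> V)
     \<and> (\<forall>x y. E x y \<longrightarrow> E y x) \<and> (\<forall>x. \<not> E x x)"

definition nbhd :: "'a set \<Rightarrow> ('a \<Rightarrow> 'a \<Rightarrow> bool) \<Rightarrow> 'a \<Rightarrow> 'a set" where
  "nbhd V E v = {u \<in> V. E v u}"

definition clique :: "('a \<Rightarrow> 'a \<Rightarrow> bool) \<Rightarrow> 'a set \<Rightarrow> bool" where
  "clique E S \<longleftrightarrow> (\<forall>x\<in>S. \<forall>y\<in>S. x \<noteq> y \<longrightarrow> E x y)"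

definition stable :: "('a \<Rightarrow> 'a \<Rightarrow> bool) \<Rightarrow> 'a set \<Rightarrow> bool" where
  "stable E S \<longleftrightarrow> (\<forall>x\<in>S. \<forall>y\<in>S. \<not> E x y)"

definition simplicial :: "'a set \<Rightarrow> ('a \<Rightarrow> 'a \<Rightarrow> bool) \<Rightarrow> 'a \<Rightarrow> bool" where
  "simplicial V E v \<longleftrightarrow> clique E (nbhd V E v)"

definition antisimplicial :: "'a set \<Rightarrow> ('a \<Rightarrow> 'a \<Rightarrow> bool) \<Rightarrow> 'a \<Rightarrow> bool" where
  "antisimplicial V E v \<longleftrightarrow> stable E (V - nbhd V E v)"

definition mixed :: "('a \<Rightarrow> 'a \<Rightarrow> bool) \<Rightarrow> 'a \<Rightarrow> 'a set \<Rightarrow> bool" where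
  "mixed E b X \<longleftrightarrow> b \<notin> X \<and> (\<exists>x\<in>X. E b x) \<and> (\<exists>y\<in>X. \<not> E b y)"

definition homogeneous :: "'a set \<Rightarrow> ('a \<Rightarrow> 'a \<Rightarrow> bool) \<Rightarrow> 'a set \<Rightarrow> bool" where
  "homogeneous V E X \<longleftrightarrow> X \<subseteq> V \<and> 1 < card X \<and> card X < card V
     \<and> (\<forall>b\<in>V - X. \<not> mixed E b X)"

definition prime_graph :: "'a set \<Rightarrow> ('a \<Rightarrow> 'a \<Rightarrow> bool) \<Rightarrow> bool" where
  "prime_graph V E \<longleftrightarrow> card V \<ge> 4 \<and> (\<nexists>X. homogeneous V E X)"

definition induced_P4 :: "'a set \<Rightarrow> ('a \<Rightarrow> 'a \<Rightarrow> bool) \<Rightarrow> 'a set \<Rightarrow> bool" where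
  "induced_P4 V E S \<longleftrightarrow> S \<subseteq> V \<and> (\<exists>f. bij_betw f {0..<4::nat} S \<and>
     (\<forall>i<4. \<forall>j<4. E (f i) (f j) \<longleftrightarrow> (i = j + 1 \<or> j = i + 1)))"

definition deg_in :: "('a \<Rightarrow> 'a \<Rightarrow> bool) \<Rightarrow> 'a set \<Rightarrow> 'a \<Rightarrow> nat" where
  "deg_in E S v = card {u \<in> S. E v u}"

end

theory Submission
  imports Defs
begin

lemma all_less_4: "(\<forall>i<(4::nat). P i) = (P 0 \<and> P 1 \<and> P 2 \<and> P 3)"
  by (auto simp: numeral_eq_Suc less_Suc_eq)

lemma mk_P4:
  assumes g: "graph V E" and V: "a \<in> V" "b \<in> V" "c \<in> V" "d \<in> V"
    and dist: "a \<noteq> b" "a \<noteq> c" "a \<noteq> d" "b \<noteq> c" "b \<noteq> d" "c \<noteq> d"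
    and e: "E a b" "E b c" "E c d" "\<not> E a c" "\<not> E a d" "\<not> E b d"
  shows "induced_P4 V E {a,b,c,d} \<and> deg_in E {a,b,c,d} a = 1 \<and> deg_in E {a,b,c,d} c = 2"
proof -
  have sym: "\<And>x y. E x y \<Longrightarrow> E y x" and irr: "\<And>x. \<not> E x x"
    using g unfolding graph_def by auto
  define f where "f = (\<lambda>i::nat. if i = 0 then a else if i = 1 then b else if i = 2 then c else d)"
  have img: "f ` {0..<4} = {a,b,c,d}"
  proof -
    have "{0..<4::nat} = {0,1,2,3}" by auto
    then show ?thesis by (auto simp: f_def)
  qed
  have inj: "inj_on f {0..<4}"
    unfolding inj_on_def using dist
    by (auto simp: f_def all_less_4 split: if_splits)
  have bij: "bij_betw f {0..<4::nat} {a,b,c,d}" using inj img by (simp add: bij_betw_def)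
  have e2: "E b a" "E c b" "E d c" "\<not> E c a" "\<not> E d a" "\<not> E d b"
    using e sym by blast+
  have edges: "\<forall>i<4. \<forall>j<4. E (f i) (f j) \<longleftrightarrow> (i = j + 1 \<or> j = i + 1)"
    unfolding all_less_4 using e e2 irr by (simp add: f_def)
  have P4: "induced_P4 V E {a,b,c,d}" unfolding induced_P4_def using V bij edges by auto
  have s1: "{u \<in> {a,b,c,d}. E a u} = {b}" using e e2 irr by auto
  have s2: "{u \<in> {a,b,c,d}. E c u} = {b,d}" using e e2 irr by auto
  show ?thesis using P4 s1 s2 dist by (simp add: deg_in_def)
qed

lemma card4: assumes "(i::nat) < 4" shows "card {j \<in> {0..<4::nat}. i = j + 1 \<or> j = i + 1} = (if i = 0 \<or> i = 3 then 1 else 2)"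
  proof -
    have "i = 0 \<or> i = 1 \<or> i = 2 \<or> i = 3" using assms by auto
    moreover have "i = 0 \<Longrightarrow> {j \<in> {0..<4::nat}. i = j + 1 \<or> j = i + 1} = {1}" by auto
    moreover have "i = 1 \<Longrightarrow> {j \<in> {0..<4::nat}. i = j + 1 \<or> j = i + 1} = {0,2}" by auto
    moreover have "i = 2 \<Longrightarrow> {j \<in> {0..<4::nat}. i = j + 1 \<or> j = i + 1} = {1,3}" by auto
    moreover have "i = 3 \<Longrightarrow> {j \<in> {0..<4::nat}. i = j + 1 \<or> j = i + 1} = {2}" by auto
    ultimately show ?thesis by (elim disjE) (simp only:, simp)+
  qed

lemma deg_P4:
  assumes bij: "bij_betw f {0..<4::nat} S"
    and edges: "\<forall>i<4. \<forall>j<4. E (f i) (f j) \<longleftrightarrow> (i = j + 1 \<or> j = i + 1)"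
    and i: "i < 4"
  shows "deg_in E S (f i) = (if i = 0 \<or> i = 3 then 1 else 2)"
proof -
  have S: "S = f ` {0..<4}" using bij by (simp add: bij_betw_def)
  have inj: "inj_on f {0..<4}" using bij by (simp add: bij_betw_def)
  have e1: "{u \<in> S. E (f i) u} = f ` {j \<in> {0..<4}. E (f i) (f j)}"
    unfolding S by blast
  have e2: "{j \<in> {0..<4::nat}. E (f i) (f j)} = {j \<in> {0..<4::nat}. i = j + 1 \<or> j = i + 1}"
  proof (rule Collect_cong)
    fix j show "(j \<in> {0..<4::nat} \<and> E (f i) (f j)) = (j \<in> {0..<4::nat} \<and> (i = j + 1 \<or> j = i + 1))"
      using edges i by auto
  qed
  have inj2: "inj_on f {j \<in> {0..<4::nat}. i = j + 1 \<or> j = i + 1}"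
    by (rule inj_on_subset[OF inj]) auto
  have "deg_in E S (f i) = card {j \<in> {0..<4::nat}. i = j + 1 \<or> j = i + 1}"
    unfolding deg_in_def e1 e2 using card_image[OF inj2] by simp
  also have "\<dots> = (if i = 0 \<or> i = 3 then 1 else 2)" by (rule card4[OF i])
  finally show ?thesis .
qed

lemma rt_inv:
  assumes "(a,z) \<in> R\<^sup>*" "\<forall>x y. (x,y) \<in> R \<longrightarrow> (P x \<longleftrightarrow> P y)"
  shows "P z \<longleftrightarrow> P a"
  using assms by (induction rule: rtrancl_induct) auto

lemma rt_sub:
  assumes "(a,z) \<in> R\<^sup>*" "a \<in> N" "\<forall>x y. (x,y) \<in> R \<longrightarrow> y \<in> N"
  shows "z \<in> N"
  using assms by (induction rule: rtrancl_induct) auto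

lemma find_mixed:
  assumes g: "graph V E" and pr: "prime_graph V E" and v: "v \<in> V"
    and CV: "C \<subseteq> V - {v}" and ab: "a \<in> C" "b \<in> C" "a \<noteq> b"
  shows "\<exists>w\<in>V - C. mixed E w C"
proof -
  have fin: "finite V" using g by (simp add: graph_def)
  have "card C < card V" using CV v fin by (intro psubset_card_mono) auto
  moreover have "1 < card C"
  proof -
    have "finite C" using CV fin finite_subset by blast
    then have "card {a,b} \<le> card C" using ab by (intro card_mono) auto
    then show ?thesis using ab by simp
  qed
  moreover have "\<not> homogeneous V E C" using pr by (simp add: prime_graph_def)
  ultimately show ?thesis using CV unfolding homogeneous_def by auto
qed

theorem lemma3p3:
  fixes V :: "'a set" and E :: "'a \<Rightarrow> 'a \<Rightarrow> bool" and v :: 'a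
  assumes "graph V E" and "prime_graph V E" and "v \<in> V"
  shows "(simplicial V E v \<longleftrightarrow>
            (\<forall>S. induced_P4 V E S \<and> v \<in> S \<longrightarrow> deg_in E S v = 1))
       \<and> (antisimplicial V E v \<longleftrightarrow>
            (\<forall>S. induced_P4 V E S \<and> v \<in> S \<longrightarrow> deg_in E S v = 2))"
proof -
  note g = assms(1) and pr = assms(2) and vV = assms(3)
  have sym: "\<And>x y. E x y \<Longrightarrow> E y x" and irr: "\<And>x. \<not> E x x"
    and inV: "\<And>x y. E x y \<Longrightarrow> x \<in> V \<and> y \<in> V"
    using g unfolding graph_def by auto
  define N where "N = nbhd V E v"
  have N_iff: "\<And>x. x \<in> N \<longleftrightarrow> E v x" using inV unfolding N_def nbhd_def by auto
  have A1: "simplicial V E v \<Longrightarrow> induced_P4 V E S \<Longrightarrow> v \<in> S \<Longrightarrow> deg_in E S v = 1" for S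
  proof -
    assume s: "simplicial V E v" and P: "induced_P4 V E S" and vS: "v \<in> S"
    obtain f where bij: "bij_betw f {0..<4::nat} S"
      and edges: "\<forall>i<4. \<forall>j<4. E (f i) (f j) \<longleftrightarrow> (i = j + 1 \<or> j = i + 1)"
      using P unfolding induced_P4_def by blast
    obtain i where i: "i < 4" "v = f i" using bij vS unfolding bij_betw_def by auto
    have inj: "inj_on f {0..<4}" using bij by (simp add: bij_betw_def)
    have cl: "\<And>x y. E v x \<Longrightarrow> E v y \<Longrightarrow> x \<noteq> y \<Longrightarrow> E x y"
      using s inV unfolding simplicial_def clique_def nbhd_def by blast
    have "i = 0 \<or> i = 3"
    proof (rule ccontr)
      assume "\<not> (i = 0 \<or> i = 3)"
      then have "i = 1 \<or> i = 2" using i by auto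
      then show False
      proof
        assume "i = 1"
        then have v1: "v = f 1" using i by simp
        have "E (f 1) (f 0)" "E (f 1) (f 2)" "\<not> E (f 0) (f 2)"
          using edges[rule_format, of 1 0] edges[rule_format, of 1 2] edges[rule_format, of 0 2] by simp_all
        moreover have "f 0 \<noteq> f 2" by (simp add: inj_on_eq_iff[OF inj])
        ultimately show False using cl v1 by metis
      next
        assume "i = 2"
        then have v1: "v = f 2" using i by simp
        have "E (f 2) (f 1)" "E (f 2) (f 3)" "\<not> E (f 1) (f 3)"
          using edges[rule_format, of 2 1] edges[rule_format, of 2 3] edges[rule_format, of 1 3] by simp_all
        moreover have "f 1 \<noteq> f 3" by (simp add: inj_on_eq_iff[OF inj])
        ultimately show False using cl v1 by metis
      qed
    qed
    then show ?thesis using deg_P4[OF bij edges i(1)] i by simp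
  qed
  have A2: "antisimplicial V E v \<Longrightarrow> induced_P4 V E S \<Longrightarrow> v \<in> S \<Longrightarrow> deg_in E S v = 2" for S
  proof -
    assume s: "antisimplicial V E v" and P: "induced_P4 V E S" and vS: "v \<in> S"
    obtain f where bij: "bij_betw f {0..<4::nat} S"
      and edges: "\<forall>i<4. \<forall>j<4. E (f i) (f j) \<longleftrightarrow> (i = j + 1 \<or> j = i + 1)"
      using P unfolding induced_P4_def by blast
    obtain i where i: "i < 4" "v = f i" using bij vS unfolding bij_betw_def by auto
    have SV: "S \<subseteq> V" using P unfolding induced_P4_def by blast
    have fV: "\<And>j. j < 4 \<Longrightarrow> f j \<in> V" using bij SV unfolding bij_betw_def by auto
    have st: "\<And>x y. x \<in> V \<Longrightarrow> y \<in> V \<Longrightarrow> \<not> E v x \<Longrightarrow> \<not> E v y \<Longrightarrow> \<not> E x y"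
      using s unfolding antisimplicial_def stable_def nbhd_def by blast
    have "\<not> (i = 0 \<or> i = 3)"
    proof
      assume "i = 0 \<or> i = 3"
      then show False
      proof
        assume "i = 0"
        then have "\<not> E v (f 2)" "\<not> E v (f 3)" "E (f 2) (f 3)" using edges i by auto
        then show False using st fV by simp
      next
        assume "i = 3"
        then have "\<not> E v (f 0)" "\<not> E v (f 1)" "E (f 0) (f 1)" using edges i by auto
        then show False using st fV by simp
      qed
    qed
    then show ?thesis using deg_P4[OF bij edges i(1)] i by simp
  qed
  have B1: "\<not> simplicial V E v \<Longrightarrow> \<exists>S. induced_P4 V E S \<and> v \<in> S \<and> deg_in E S v = 2"
  proof -
    assume ns: "\<not> simplicial V E v"
    then obtain a b where ab: "a \<in> N" "b \<in> N" "a \<noteq> b" "\<not> E a b"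
      unfolding simplicial_def clique_def N_def by blast
    define R where "R = {(x,y). x \<in> N \<and> y \<in> N \<and> x \<noteq> y \<and> \<not> E x y}"
    define C where "C = {z. (a,z) \<in> R\<^sup>*}"
    have CN: "C \<subseteq> N"
    proof
      fix z assume "z \<in> C"
      then have "(a,z) \<in> R\<^sup>*" by (simp add: C_def)
      moreover have "\<forall>x y. (x,y) \<in> R \<longrightarrow> y \<in> N" by (simp add: R_def)
      ultimately show "z \<in> N" using rt_sub ab(1) by metis
    qed
    have NV: "N \<subseteq> V - {v}" using irr unfolding N_def nbhd_def by auto
    have aC: "a \<in> C" unfolding C_def by simp
    have bC: "b \<in> C" using ab unfolding C_def R_def by auto
    obtain w where w: "w \<in> V - C" "mixed E w C"
      using find_mixed[OF g pr vV _ aC bC ab(3)] CN NV by blast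
    obtain x y where xy: "x \<in> C" "y \<in> C" "E w x" "\<not> E w y"
      using w unfolding mixed_def by blast
    have wv: "w \<noteq> v" using xy CN N_iff by auto
    have wN: "w \<notin> N"
    proof
      assume "w \<in> N"
      moreover have "\<not> E y w" using xy(4) sym[of y w] by blast
      ultimately have "(y,w) \<in> R" using xy CN w unfolding R_def by auto
      then have "w \<in> C" using xy unfolding C_def by (auto intro: rtrancl_into_rtrancl)
      then show False using w by simp
    qed
    have "\<not> (\<forall>x y. (x,y) \<in> R \<longrightarrow> (E w x \<longleftrightarrow> E w y))"
    proof
      assume h: "\<forall>x y. (x,y) \<in> R \<longrightarrow> (E w x \<longleftrightarrow> E w y)"
      have "(a,x) \<in> R\<^sup>*" "(a,y) \<in> R\<^sup>*" using xy(1,2) by (simp_all add: C_def)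
      then have "E w x \<longleftrightarrow> E w a" "E w y \<longleftrightarrow> E w a" using rt_inv[OF _ h] by blast+
      then show False using xy by simp
    qed
    then obtain p q where pq: "(p,q) \<in> R" "E w p \<noteq> E w q" by blast
    have Rsym: "(q,p) \<in> R" using pq(1) sym[of q p] unfolding R_def by auto
    obtain x' y' where xy': "(x',y') \<in> R" "E w x'" "\<not> E w y'"
      using pq Rsym by (cases "E w p") auto
    have e: "x' \<in> N" "y' \<in> N" "x' \<noteq> y'" "\<not> E x' y'" using xy' unfolding R_def by auto
    have nwv: "\<not> E w v" using wN N_iff[of w] sym[of w v] by blast
    have ex'v: "E x' v" using e(1) N_iff[of x'] sym[of v x'] by blast
    have P: "induced_P4 V E {w,x',v,y'} \<and> deg_in E {w,x',v,y'} w = 1 \<and> deg_in E {w,x',v,y'} v = 2"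
    proof (rule mk_P4[OF g])
      show "w \<in> V" "x' \<in> V" "v \<in> V" "y' \<in> V" using w vV NV e by auto
      show "w \<noteq> x'" using xy'(2) irr by blast
      show "w \<noteq> v" by (rule wv)
      show "w \<noteq> y'" using wN e(2) by blast
      show "x' \<noteq> v" using e(1) N_iff irr by blast
      show "x' \<noteq> y'" by (rule e(3))
      show "v \<noteq> y'" using e(2) N_iff irr by blast
      show "E w x'" "E x' v" "E v y'" "\<not> E w v" "\<not> E w y'" "\<not> E x' y'"
        using xy' ex'v e N_iff nwv by blast+
    qed
    then show ?thesis by blast
  qed
  have B2: "\<not> antisimplicial V E v \<Longrightarrow> \<exists>S. induced_P4 V E S \<and> v \<in> S \<and> deg_in E S v = 1"
  proof -
    assume ns: "\<not> antisimplicial V E v"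
    then obtain a b where ab0: "a \<in> V - N" "b \<in> V - N" "E a b"
      unfolding antisimplicial_def stable_def N_def by blast
    define M where "M = V - N - {v}"
    have ab: "a \<in> M" "b \<in> M" "a \<noteq> b"
      using ab0 N_iff irr sym[OF ab0(3)] inV unfolding M_def by auto
    define R where "R = {(x,y). x \<in> M \<and> y \<in> M \<and> E x y}"
    define C where "C = {z. (a,z) \<in> R\<^sup>*}"
    have CM: "C \<subseteq> M"
    proof
      fix z assume "z \<in> C"
      then have "(a,z) \<in> R\<^sup>*" by (simp add: C_def)
      moreover have "\<forall>x y. (x,y) \<in> R \<longrightarrow> y \<in> M" by (simp add: R_def)
      ultimately show "z \<in> M" using rt_sub ab(1) by metis
    qed
    have MV: "M \<subseteq> V - {v}" unfolding M_def by auto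
    have aC: "a \<in> C" unfolding C_def by simp
    have bC: "b \<in> C" using ab ab0 unfolding C_def R_def by auto
    obtain w where w: "w \<in> V - C" "mixed E w C"
      using find_mixed[OF g pr vV _ aC bC ab(3)] CM MV by blast
    obtain x y where xy: "x \<in> C" "y \<in> C" "E w x" "\<not> E w y"
      using w unfolding mixed_def by blast
    have wv: "w \<noteq> v" using xy CM N_iff inV unfolding M_def by auto
    have wM: "w \<notin> M"
    proof
      assume "w \<in> M"
      then have "(x,w) \<in> R" using xy CM sym[OF xy(3)] unfolding R_def by auto
      then have "w \<in> C" using xy unfolding C_def by (auto intro: rtrancl_into_rtrancl)
      then show False using w by simp
    qed
    have wN: "w \<in> N" using wM w wv unfolding M_def by auto
    have "\<not> (\<forall>x y. (x,y) \<in> R \<longrightarrow> (E w x \<longleftrightarrow> E w y))"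
    proof
      assume h: "\<forall>x y. (x,y) \<in> R \<longrightarrow> (E w x \<longleftrightarrow> E w y)"
      have "(a,x) \<in> R\<^sup>*" "(a,y) \<in> R\<^sup>*" using xy(1,2) by (simp_all add: C_def)
      then have "E w x \<longleftrightarrow> E w a" "E w y \<longleftrightarrow> E w a" using rt_inv[OF _ h] by blast+
      then show False using xy by simp
    qed
    then obtain p q where pq: "(p,q) \<in> R" "E w p \<noteq> E w q" by blast
    have Rsym: "(q,p) \<in> R" using pq(1) sym[of p q] unfolding R_def by auto
    obtain x' y' where xy': "(x',y') \<in> R" "E w x'" "\<not> E w y'"
      using pq Rsym by (cases "E w p") auto
    have e: "x' \<in> M" "y' \<in> M" "E x' y'" using xy' unfolding R_def by auto
    have P: "induced_P4 V E {v,w,x',y'} \<and> deg_in E {v,w,x',y'} v = 1 \<and> deg_in E {v,w,x',y'} x' = 2"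
      apply (rule mk_P4[OF g])
      using w vV MV e xy' wN wv irr N_iff unfolding M_def by auto
    then show ?thesis by blast
  qed
  show ?thesis using A1 A2 B1 B2 by fastforce
qed

end
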